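(* Let $O_1,O_2$ be Hermitian operators on $\mathcal H$. Then $|\tilde\Xi_{O_1,O_2}\cdot\Xi_{O_1,O_2}|\le\|\tilde\Xi_{O_1,O_2}\|_2^2=\|\Xi_{O_1,O_2}\|_2^2$. If moreover $\rho$ is a density operator and $O$ is traceless Hermitian, then $$|\tilde\Xi_{\rho,O}\cdot\Xi_{\rho,O}|\le\|\tilde\Xi_{\rho,O}\|_2^2=\|\Xi_{\rho,O}\|_2^2\le\|\Xi_O^2\|_{[d]}\le\|\Xi_O\|_2^2=d\|O\|_2^2.$$
   Context: $n\ge1$, $d=2^n$, $\mathcal H=(\mathbb C^2)^{\otimes n}$, $\overline{\mathcal P}_n=\{I,X,Y,Z\}^{\otimes n}$. For operators $A,B$ define functions on $\overline{\mathcal P}_n$ regarded as vectors in $\mathbb R^{d^2}$ (Euclidean norm, standard inner product $\cdot$): $\Xi_A(P)=\operatorname{tr}(AP)$, $\Xi_{A,B}(P)=\operatorname{tr}(AP)\operatorname{tr}(BP)$, $\tilde\Xi_{A,B}(P)=\operatorname{tr}(APBP)$. $\|\Xi_O^2\|_{[d]}$ is the sum of the $d$ largest values of $\Xi_O(P)^2$; $\|O\|_2$ is the Hilbert–Schmidt norm. *)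

theory Defs
  imports "HOL-Analysis.Analysis" "Jordan_Normal_Form.Matrix"
begin

datatype pauli = PI | PX | PY | PZ

definition sigma :: "pauli \<Rightarrow> complex mat" where
  "sigma p = (case p of
      PI \<Rightarrow> mat 2 2 (\<lambda>(i,j). if i = j then 1 else 0)
    | PX \<Rightarrow> mat 2 2 (\<lambda>(i,j). if i \<noteq> j then 1 else 0)
    | PY \<Rightarrow> mat 2 2 (\<lambda>(i,j). if i = 0 \<and> j = 1 then - \<i> else if i = 1 \<and> j = 0 then \<i> else 0)
    | PZ \<Rightarrow> mat 2 2 (\<lambda>(i,j). if i = j then (if i = 0 then 1 else -1) else 0))"

definition kron :: "complex mat \<Rightarrow> complex mat \<Rightarrow> complex mat" where
  "kron A B = mat (dim_row A * dim_row B) (dim_col A * dim_col B)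
     (\<lambda>(i,j). A $$ (i div dim_row B, j div dim_col B) * B $$ (i mod dim_row B, j mod dim_col B))"

fun pauli_mat :: "pauli list \<Rightarrow> complex mat" where
  "pauli_mat [] = 1\<^sub>m 1"
| "pauli_mat (p # ps) = kron (sigma p) (pauli_mat ps)"

definition paulis :: "nat \<Rightarrow> pauli list set" where
  "paulis n = {ps. length ps = n}"

definition tr :: "complex mat \<Rightarrow> complex" where
  "tr A = (\<Sum>i<dim_row A. A $$ (i,i))"

definition hermitian :: "nat \<Rightarrow> complex mat \<Rightarrow> bool" where
  "hermitian d A \<longleftrightarrow> A \<in> carrier_mat d d \<and> (\<forall>i<d. \<forall>j<d. A $$ (i,j) = cnj (A $$ (j,i)))"

definition psd :: "nat \<Rightarrow> complex mat \<Rightarrow> bool" where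
  "psd d A \<longleftrightarrow> A \<in> carrier_mat d d \<and> (\<forall>v \<in> carrier_vec d. 0 \<le> Re ((A *\<^sub>v v) \<bullet>c v))"

definition density :: "nat \<Rightarrow> complex mat \<Rightarrow> bool" where
  "density d \<rho> \<longleftrightarrow> hermitian d \<rho> \<and> psd d \<rho> \<and> tr \<rho> = 1"

(* \<Xi>_A(P) = tr(AP); real for Hermitian A *)
definition Xi :: "complex mat \<Rightarrow> pauli list \<Rightarrow> real" where
  "Xi A P = Re (tr (A * pauli_mat P))"

definition Xi2 :: "complex mat \<Rightarrow> complex mat \<Rightarrow> pauli list \<Rightarrow> real" where
  "Xi2 A B P = Re (tr (A * pauli_mat P) * tr (B * pauli_mat P))"

definition Xit :: "complex mat \<Rightarrow> complex mat \<Rightarrow> pauli list \<Rightarrow> real" where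
  "Xit A B P = Re (tr (A * pauli_mat P * B * pauli_mat P))"

definition pdot :: "nat \<Rightarrow> (pauli list \<Rightarrow> real) \<Rightarrow> (pauli list \<Rightarrow> real) \<Rightarrow> real" where
  "pdot n f g = (\<Sum>P\<in>paulis n. f P * g P)"

definition pnorm :: "nat \<Rightarrow> (pauli list \<Rightarrow> real) \<Rightarrow> real" where
  "pnorm n f = sqrt (\<Sum>P\<in>paulis n. (f P)^2)"

definition top_sum :: "nat \<Rightarrow> ('a \<Rightarrow> real) \<Rightarrow> 'a set \<Rightarrow> real" where
  "top_sum k f S = Max {(\<Sum>x\<in>T. f x) | T. T \<subseteq> S \<and> card T = k}"

definition hs_norm :: "complex mat \<Rightarrow> real" where
  "hs_norm A = sqrt (\<Sum>i<dim_row A. \<Sum>j<dim_col A. (cmod (A $$ (i,j)))^2)"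

end

theory Submission
  imports Defs
begin


lemma mult_entry:
  assumes "A \<in> carrier_mat n m" "B \<in> carrier_mat m k" "i < n" "j < k"
  shows "(A * B) $$ (i,j) = (\<Sum>l<m. A $$ (i,l) * B $$ (l,j))"
  using assms by (auto simp: scalar_prod_def atLeast0LessThan)

lemma sigma_carrier[simp]: "sigma p \<in> carrier_mat 2 2"
  by (cases p) (auto simp: sigma_def)

lemma dim_sigma[simp]: "dim_row (sigma p) = 2" "dim_col (sigma p) = 2"
  by (cases p; simp add: sigma_def)+

lemma less2: "(i::nat) < 2 \<longleftrightarrow> i = 0 \<or> i = 1" by auto

lemma sum2: "(\<Sum>l<(2::nat). f l) = f 0 + f 1"
  by (simp add: numeral_2_eq_2)

lemma sum02: "(\<Sum>l\<in>{0..<(2::nat)}. f l) = f 0 + f 1"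
  by (simp add: numeral_2_eq_2)

lemma sigma_entry: "i < 2 \<Longrightarrow> j < 2 \<Longrightarrow> sigma p $$ (i,j) =
  (case p of PI \<Rightarrow> (if i = j then 1 else 0)
   | PX \<Rightarrow> (if i \<noteq> j then 1 else 0)
   | PY \<Rightarrow> (if i = 0 \<and> j = 1 then - \<i> else if i = 1 \<and> j = 0 then \<i> else 0)
   | PZ \<Rightarrow> (if i = j then (if i = 0 then 1 else -1) else 0))"
  by (cases p) (auto simp: sigma_def)

definition chi1 :: "pauli \<Rightarrow> pauli \<Rightarrow> real" where
  "chi1 p q = (if p = PI \<or> q = PI \<or> p = q then 1 else -1)"

lemma sigma_sq: "sigma p * sigma p = 1\<^sub>m 2"
proof (rule eq_matI)
  fix i j assume "i < dim_row (1\<^sub>m 2 :: complex mat)" "j < dim_col (1\<^sub>m 2 :: complex mat)"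
  then have ij: "i < 2" "j < 2" by auto
  show "(sigma p * sigma p) $$ (i, j) = 1\<^sub>m 2 $$ (i, j)"
    using ij by (simp add: mult_entry[of _ 2 2 _ 2] sum2 del: index_mult_mat)
      (cases p; auto simp: less2 sigma_entry)
qed auto

lemma sigma_conj: "sigma p * sigma q * sigma p = complex_of_real (chi1 p q) \<cdot>\<^sub>m sigma q"
proof (rule eq_matI)
  fix i j assume "i < dim_row (complex_of_real (chi1 p q) \<cdot>\<^sub>m sigma q)" "j < dim_col (complex_of_real (chi1 p q) \<cdot>\<^sub>m sigma q)"
  then have ij: "i < 2" "j < 2" by auto
  have c: "sigma p * sigma q \<in> carrier_mat 2 2" by (rule mult_carrier_mat[OF sigma_carrier sigma_carrier])
  show "(sigma p * sigma q * sigma p) $$ (i, j) = (complex_of_real (chi1 p q) \<cdot>\<^sub>m sigma q) $$ (i, j)"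
    using ij apply (simp add: mult_entry[OF c, of _ 2] mult_entry[of _ 2 2 _ 2] sum2 del: index_mult_mat)
    by (cases p; cases q; auto simp: less2 sigma_entry chi1_def)
qed auto

lemma sigma_herm: "i < 2 \<Longrightarrow> j < 2 \<Longrightarrow> sigma p $$ (i,j) = cnj (sigma p $$ (j,i))"
  by (auto simp: less2 sigma_entry split: pauli.splits)

lemma UNIV_pauli: "(UNIV :: pauli set) = {PI,PX,PY,PZ}"
  using pauli.exhaust by auto

lemma sum_pauli: "(\<Sum>p\<in>UNIV. f p) = f PI + f PX + f PY + f PZ"
  by (simp add: UNIV_pauli ac_simps)

lemma sigma_complete: "i < 2 \<Longrightarrow> j < 2 \<Longrightarrow> k < 2 \<Longrightarrow> l < 2 \<Longrightarrow>
   (\<Sum>p\<in>UNIV. sigma p $$ (i,j) * sigma p $$ (k,l)) = (if i = l \<and> j = k then 2 else 0)"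
  by (auto simp: sum_pauli less2 sigma_entry)

lemma sigma_trace: "tr (sigma p * sigma q) = (if p = q then 2 else 0)"
  unfolding tr_def
  by (cases p; cases q) (simp_all add: scalar_prod_def sum02 sum2 sigma_entry)



lemma sum_divmod: "(\<Sum>k<a*b. f k) = (\<Sum>x<a. \<Sum>y<b. f (x*b+y))" for a b :: nat
proof (induction a)
  case 0 then show ?case by simp
next
  case (Suc a)
  have e: "{..<Suc a * b} = {..<a*b} \<union> {a*b..<a*b+b}" by auto
  have "(\<Sum>k<Suc a*b. f k) = (\<Sum>k<a*b. f k) + (\<Sum>k\<in>{a*b..<a*b+b}. f k)"
    unfolding e by (rule sum.union_disjoint) auto
  also have "(\<Sum>k\<in>{a*b..<a*b+b}. f k) = (\<Sum>y<b. f (a*b+y))"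
  proof -
    have "(\<Sum>k\<in>{a*b..<a*b+b}. f k) = (\<Sum>k\<in>{0+a*b..<b+a*b}. f k)" by (simp add: add.commute)
    also have "\<dots> = (\<Sum>y\<in>{0..<b}. f (y + a*b))" by (rule sum.shift_bounds_nat_ivl)
    finally show ?thesis by (simp add: atLeast0LessThan add.commute)
  qed
  finally show ?case using Suc by simp
qed

lemma kron_dims[simp]: "dim_row (kron A B) = dim_row A * dim_row B" "dim_col (kron A B) = dim_col A * dim_col B"
  by (simp_all add: kron_def)

lemma kron_carrier: "A \<in> carrier_mat a1 a2 \<Longrightarrow> B \<in> carrier_mat b1 b2 \<Longrightarrow> kron A B \<in> carrier_mat (a1*b1) (a2*b2)"
  by (rule carrier_matI) (simp_all only: kron_dims carrier_matD)

lemma kron_entry: "i < dim_row A * dim_row B \<Longrightarrow> j < dim_col A * dim_col B \<Longrightarrow>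
  kron A B $$ (i,j) = A $$ (i div dim_row B, j div dim_col B) * B $$ (i mod dim_row B, j mod dim_col B)"
  by (simp add: kron_def)

lemma kron_mult:
  assumes A: "A \<in> carrier_mat a1 a2" and B: "B \<in> carrier_mat b1 b2"
    and C: "C \<in> carrier_mat a2 c2" and D: "D \<in> carrier_mat b2 d2"
  shows "kron A B * kron C D = kron (A * C) (B * D)"
proof (rule eq_matI)
  fix i j assume "i < dim_row (kron (A * C) (B * D))" "j < dim_col (kron (A * C) (B * D))"
  then have i: "i < a1 * b1" and j: "j < c2 * d2" using A B C D by auto
  have b1: "b1 > 0" using i by (cases b1) auto
  have d2: "d2 > 0" using j by (cases d2) auto
  have i1: "i div b1 < a1" using i by (simp add: less_mult_imp_div_less)
  have j1: "j div d2 < c2" using j by (simp add: less_mult_imp_div_less)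
  have i2: "i mod b1 < b1" using b1 by simp
  have j2: "j mod d2 < d2" using d2 by simp
  have "(kron A B * kron C D) $$ (i,j) = (\<Sum>k<a2*b2. kron A B $$ (i,k) * kron C D $$ (k,j))"
    by (rule mult_entry[OF kron_carrier[OF A B] kron_carrier[OF C D] i j])
  also have "\<dots> = (\<Sum>k<a2*b2. (A $$ (i div b1, k div b2) * B $$ (i mod b1, k mod b2)) *
       (C $$ (k div b2, j div d2) * D $$ (k mod b2, j mod d2)))"
    by (rule sum.cong) (use A B C D i j in \<open>auto simp: kron_entry\<close>)
  also have "\<dots> = (\<Sum>x<a2. \<Sum>y<b2. (A $$ (i div b1, x) * B $$ (i mod b1, y)) *
       (C $$ (x, j div d2) * D $$ (y, j mod d2)))"
    by (subst sum_divmod) (auto intro!: sum.cong)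
  also have "\<dots> = (\<Sum>x<a2. A $$ (i div b1, x) * C $$ (x, j div d2)) * (\<Sum>y<b2. B $$ (i mod b1, y) * D $$ (y, j mod d2))"
    by (simp add: sum_product ac_simps)
  also have "\<dots> = (A * C) $$ (i div b1, j div d2) * (B * D) $$ (i mod b1, j mod d2)"
    by (simp add: mult_entry[OF A C i1 j1] mult_entry[OF B D i2 j2])
  also have "\<dots> = kron (A * C) (B * D) $$ (i,j)"
    using A B C D i j by (simp add: kron_entry)
  finally show "(kron A B * kron C D) $$ (i,j) = kron (A * C) (B * D) $$ (i,j)" .
qed (use A B C D in auto)

lemma kron_smult_left: "kron (c \<cdot>\<^sub>m A) B = c \<cdot>\<^sub>m kron A B"
  by (rule eq_matI) (auto simp: kron_def less_mult_imp_div_less)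

lemma kron_smult_right: "kron A (c \<cdot>\<^sub>m B) = c \<cdot>\<^sub>m kron A B"
proof (rule eq_matI)
  fix i j assume "i < dim_row (c \<cdot>\<^sub>m kron A B)" "j < dim_col (c \<cdot>\<^sub>m kron A B)"
  then have i: "i < dim_row A * dim_row B" and j: "j < dim_col A * dim_col B" by auto
  have "i mod dim_row B < dim_row B" using i by (cases "dim_row B") auto
  moreover have "j mod dim_col B < dim_col B" using j by (cases "dim_col B") auto
  ultimately show "kron A (c \<cdot>\<^sub>m B) $$ (i, j) = (c \<cdot>\<^sub>m kron A B) $$ (i, j)"
    using i j by (simp add: kron_def)
qed auto

lemma kron_one: "a > 0 \<Longrightarrow> b > 0 \<Longrightarrow> kron (1\<^sub>m a) (1\<^sub>m b) = 1\<^sub>m (a*b)"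
proof (rule eq_matI)
  fix i j assume ab: "a > 0" "b > 0" and "i < dim_row (1\<^sub>m (a*b) :: complex mat)" "j < dim_col (1\<^sub>m (a*b) :: complex mat)"
  then have i: "i < a*b" and j: "j < a*b" by auto
  have "(i div b = j div b \<and> i mod b = j mod b) \<longleftrightarrow> i = j"
    by (metis div_mult_mod_eq)
  then show "kron (1\<^sub>m a) (1\<^sub>m b) $$ (i, j) = 1\<^sub>m (a * b) $$ (i, j)"
    using i j ab by (auto simp: kron_def less_mult_imp_div_less)
qed auto

lemma kron_tr:
  assumes A: "A \<in> carrier_mat a a" and B: "B \<in> carrier_mat b b"
  shows "tr (kron A B) = tr A * tr B"
proof -
  have "tr (kron A B) = (\<Sum>k<a*b. A $$ (k div b, k div b) * B $$ (k mod b, k mod b))"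
    unfolding tr_def using A B by (auto intro!: sum.cong simp: kron_entry)
  also have "\<dots> = (\<Sum>x<a. \<Sum>y<b. A $$ (x,x) * B $$ (y,y))"
    by (subst sum_divmod) (auto intro!: sum.cong)
  also have "\<dots> = tr A * tr B" unfolding tr_def using A B by (simp add: sum_product)
  finally show ?thesis .
qed



lemma smult_smult_mat: "a \<cdot>\<^sub>m (b \<cdot>\<^sub>m (A::complex mat)) = (a*b) \<cdot>\<^sub>m A"
  by (rule eq_matI) auto

lemma pauli_carrier: "pauli_mat P \<in> carrier_mat (2^length P) (2^length P)"
proof (induction P)
  case Nil then show ?case by simp
next
  case (Cons p P)
  have "kron (sigma p) (pauli_mat P) \<in> carrier_mat (2 * 2^length P) (2 * 2^length P)"
    by (rule kron_carrier[OF sigma_carrier Cons])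
  then show ?case by simp
qed

lemma pauli_dims[simp]: "dim_row (pauli_mat P) = 2^length P" "dim_col (pauli_mat P) = 2^length P"
  using pauli_carrier[of P] by auto

lemma pauli_sq: "pauli_mat P * pauli_mat P = 1\<^sub>m (2^length P)"
proof (induction P)
  case Nil then show ?case by simp
next
  case (Cons p P)
  have "pauli_mat (p # P) * pauli_mat (p # P) = kron (sigma p * sigma p) (pauli_mat P * pauli_mat P)"
    by (simp add: kron_mult[OF sigma_carrier pauli_carrier sigma_carrier pauli_carrier])
  also have "\<dots> = kron (1\<^sub>m 2) (1\<^sub>m (2^length P))" by (simp add: sigma_sq Cons)
  also have "\<dots> = 1\<^sub>m (2 * 2^length P)" by (rule kron_one) auto
  finally show ?case by simp
qed

fun chi :: "pauli list \<Rightarrow> pauli list \<Rightarrow> real" where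
  "chi (p # P) (q # Q) = chi1 p q * chi P Q"
| "chi _ _ = 1"

lemma chi_sq: "chi P Q * chi P Q = 1"
  by (induction P Q rule: chi.induct) (auto simp: chi1_def)

lemma pauli_conj: "length P = length Q \<Longrightarrow>
   pauli_mat P * pauli_mat Q * pauli_mat P = complex_of_real (chi P Q) \<cdot>\<^sub>m pauli_mat Q"
proof (induction P arbitrary: Q)
  case Nil then show ?case by (auto intro!: eq_matI)
next
  case (Cons p P)
  then obtain q Q' where Q: "Q = q # Q'" and l: "length P = length Q'" by (cases Q) auto
  have c1: "sigma p * sigma q \<in> carrier_mat 2 2" by (rule mult_carrier_mat[OF sigma_carrier sigma_carrier])
  have cQ: "pauli_mat Q' \<in> carrier_mat (2^length P) (2^length P)" using pauli_carrier[of Q'] l by simp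
  have c2: "pauli_mat P * pauli_mat Q' \<in> carrier_mat (2^length P) (2^length P)"
    using mult_carrier_mat[OF pauli_carrier[of P] cQ] .
  have "pauli_mat (p # P) * pauli_mat Q * pauli_mat (p # P) =
     kron (sigma p * sigma q * sigma p) (pauli_mat P * pauli_mat Q' * pauli_mat P)"
    by (simp add: Q kron_mult[OF sigma_carrier pauli_carrier[of P] sigma_carrier cQ]
        kron_mult[OF c1 c2 sigma_carrier pauli_carrier[of P]])
  also have "\<dots> = kron (complex_of_real (chi1 p q) \<cdot>\<^sub>m sigma q) (complex_of_real (chi P Q') \<cdot>\<^sub>m pauli_mat Q')"
    using Cons.IH[OF l] by (simp add: sigma_conj)
  also have "\<dots> = complex_of_real (chi (p # P) Q) \<cdot>\<^sub>m pauli_mat Q"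
    by (simp add: kron_smult_left kron_smult_right Q smult_smult_mat mult.commute)
  finally show ?case .
qed

lemma pauli_tr: "length P = length Q \<Longrightarrow> tr (pauli_mat P * pauli_mat Q) = (if P = Q then 2 ^ length P else 0)"
proof (induction P arbitrary: Q)
  case Nil then show ?case by (simp add: tr_def)
next
  case (Cons p P)
  then obtain q Q' where Q: "Q = q # Q'" and l: "length P = length Q'" by (cases Q) auto
  have cQ: "pauli_mat Q' \<in> carrier_mat (2^length P) (2^length P)" using pauli_carrier[of Q'] l by simp
  have "tr (pauli_mat (p # P) * pauli_mat Q) = tr (kron (sigma p * sigma q) (pauli_mat P * pauli_mat Q'))"
    by (simp add: Q kron_mult[OF sigma_carrier pauli_carrier[of P] sigma_carrier cQ])
  also have "\<dots> = tr (sigma p * sigma q) * tr (pauli_mat P * pauli_mat Q')"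
    by (rule kron_tr[OF mult_carrier_mat[OF sigma_carrier sigma_carrier] mult_carrier_mat[OF pauli_carrier[of P] cQ]])
  also have "\<dots> = (if p # P = Q then 2 ^ length (p # P) else 0)"
    using Cons.IH[OF l] by (simp add: sigma_trace Q)
  finally show ?case .
qed

lemma pauli_herm: "i < 2^length P \<Longrightarrow> j < 2^length P \<Longrightarrow> pauli_mat P $$ (i,j) = cnj (pauli_mat P $$ (j,i))"
proof (induction P arbitrary: i j)
  case Nil then show ?case by simp
next
  case (Cons p P)
  let ?D = "2^length P :: nat"
  have "?D > 0" by simp
  have i1: "i div ?D < 2" "j div ?D < 2" using Cons.prems by (auto simp: less_mult_imp_div_less mult.commute)
  have i2: "i mod ?D < ?D" "j mod ?D < ?D" by auto
  show ?case using Cons.prems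
    by (simp add: kron_entry sigma_herm[OF i1] Cons.IH[OF i2])
qed

lemma paulis_Suc: "paulis (Suc n) = (\<lambda>(p,P). p # P) ` (UNIV \<times> paulis n)"
proof (rule Set.set_eqI)
  fix x show "x \<in> paulis (Suc n) \<longleftrightarrow> x \<in> (\<lambda>(p,P). p # P) ` (UNIV \<times> paulis n)"
  proof (cases x)
    case Nil then show ?thesis by (auto simp: paulis_def)
  next
    case (Cons p P) then show ?thesis by (force simp: paulis_def)
  qed
qed

lemma paulis_finite: "finite (paulis n)"
proof (induction n)
  case 0 then show ?case by (simp add: paulis_def)
next
  case (Suc n) then show ?case
    unfolding paulis_Suc by (intro finite_imageI finite_cartesian_product) (auto simp: UNIV_pauli)
qed

lemma paulis_card: "card (paulis n) = 4^n"
proof (induction n)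
  case 0 then show ?case by (simp add: paulis_def)
next
  case (Suc n)
  have "inj_on (\<lambda>(p,P). p # P) (UNIV \<times> paulis n)" by (auto simp: inj_on_def)
  then have "card (paulis (Suc n)) = card ((UNIV::pauli set) \<times> paulis n)"
    unfolding paulis_Suc by (simp add: card_image)
  also have "\<dots> = 4 * 4^n" by (simp add: card_cartesian_product UNIV_pauli Suc)
  finally show ?case by simp
qed

lemma sum_paulis_Suc: "(\<Sum>P\<in>paulis (Suc n). g P) = (\<Sum>p\<in>UNIV. \<Sum>P\<in>paulis n. g (p # P))"
proof -
  have "inj_on (\<lambda>(p,P). p # P) (UNIV \<times> paulis n)" by (auto simp: inj_on_def)
  then have "(\<Sum>P\<in>paulis (Suc n). g P) = (\<Sum>x\<in>UNIV \<times> paulis n. g (case x of (p,P) \<Rightarrow> p # P))"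
    unfolding paulis_Suc by (rule sum.reindex[unfolded comp_def])
  also have "\<dots> = (\<Sum>p\<in>UNIV. \<Sum>P\<in>paulis n. g (p # P))"
    by (simp add: sum.cartesian_product split_def)
  finally show ?thesis .
qed

lemma pauli_complete: "i < 2^n \<Longrightarrow> j < 2^n \<Longrightarrow> k < 2^n \<Longrightarrow> l < 2^n \<Longrightarrow>
  (\<Sum>P\<in>paulis n. pauli_mat P $$ (i,j) * pauli_mat P $$ (k,l)) = (if i = l \<and> j = k then 2^n else 0)"
proof (induction n arbitrary: i j k l)
  case 0 then show ?case by (simp add: paulis_def)
next
  case (Suc n)
  let ?D = "2^n :: nat"
  have dv: "i div ?D < 2" "j div ?D < 2" "k div ?D < 2" "l div ?D < 2"
    using Suc.prems by (auto simp: less_mult_imp_div_less mult.commute)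
  have md: "i mod ?D < ?D" "j mod ?D < ?D" "k mod ?D < ?D" "l mod ?D < ?D" by auto
  have "(\<Sum>P\<in>paulis (Suc n). pauli_mat P $$ (i,j) * pauli_mat P $$ (k,l))
     = (\<Sum>p\<in>UNIV. \<Sum>P\<in>paulis n. (sigma p $$ (i div ?D, j div ?D) * sigma p $$ (k div ?D, l div ?D)) *
           (pauli_mat P $$ (i mod ?D, j mod ?D) * pauli_mat P $$ (k mod ?D, l mod ?D)))"
    unfolding sum_paulis_Suc
    by (intro sum.cong refl) (use Suc.prems in \<open>auto simp: kron_entry paulis_def\<close>)
  also have "\<dots> = (\<Sum>p\<in>UNIV. sigma p $$ (i div ?D, j div ?D) * sigma p $$ (k div ?D, l div ?D)) *
      (\<Sum>P\<in>paulis n. pauli_mat P $$ (i mod ?D, j mod ?D) * pauli_mat P $$ (k mod ?D, l mod ?D))"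
    by (subst sum_product) (rule refl)
  also have "\<dots> = (if i div ?D = l div ?D \<and> j div ?D = k div ?D then 2 else 0) *
      (if i mod ?D = l mod ?D \<and> j mod ?D = k mod ?D then 2^n else 0)"
    by (simp add: sigma_complete[OF dv] Suc.IH[OF md])
  also have "\<dots> = (if i = l \<and> j = k then 2^Suc n else 0)"
    by (auto, metis div_mult_mod_eq, metis div_mult_mod_eq)
  finally show ?case .
qed



lemma tr2: assumes "A \<in> carrier_mat d d" "B \<in> carrier_mat d d"
  shows "tr (A * B) = (\<Sum>a<d. \<Sum>b<d. A $$ (a,b) * B $$ (b,a))"
  unfolding tr_def using assms by (simp add: mult_entry[OF assms] del: index_mult_mat(1))

lemma H1: assumes "j < d" "i < d"
  shows "(\<Sum>k<d. \<Sum>l<d. if k = j \<and> i = l then (F::nat\<Rightarrow>nat\<Rightarrow>complex) k l else 0) = F j i"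
proof -
  have "(\<Sum>l<d. if k = j \<and> i = l then F k l else 0) = (if k = j then F k i else 0)" for k
    using assms by (cases "k = j") (simp_all add: sum.delta')
  then show ?thesis using assms by (simp add: sum.delta)
qed

lemma H2: assumes "a < d" "e < d"
  shows "(\<Sum>c<d. \<Sum>b<d. if b = a \<and> c = e then (F::nat\<Rightarrow>nat\<Rightarrow>complex) c b else 0) = F e a"
proof -
  have "(\<Sum>b<d. if b = a \<and> c = e then F c b else 0) = (if c = e then F c a else 0)" for c
    using assms by (cases "c = e") (simp_all add: sum.delta)
  then show ?thesis using assms by (simp add: sum.delta)
qed

lemma tr4: assumes A: "A \<in> carrier_mat d d" and B: "B \<in> carrier_mat d d"
   and C: "C \<in> carrier_mat d d" and D: "D \<in> carrier_mat d d"
  shows "tr (A * B * C * D) = (\<Sum>a<d. \<Sum>e<d. \<Sum>c<d. \<Sum>b<d. A $$ (a,b) * B $$ (b,c) * C $$ (c,e) * D $$ (e,a))"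
proof -
  have AB: "A * B \<in> carrier_mat d d" using A B by simp
  have ABC: "A * B * C \<in> carrier_mat d d" using AB C by simp
  have "tr (A * B * C * D) = (\<Sum>a<d. \<Sum>e<d. (A * B * C) $$ (a,e) * D $$ (e,a))"
    by (rule tr2[OF ABC D])
  also have "\<dots> = (\<Sum>a<d. \<Sum>e<d. \<Sum>c<d. \<Sum>b<d. A $$ (a,b) * B $$ (b,c) * C $$ (c,e) * D $$ (e,a))"
    by (intro sum.cong refl) (simp add: mult_entry[OF AB C] mult_entry[OF A B] sum_distrib_right)
  finally show ?thesis .
qed

lemma tr_comm: assumes "A \<in> carrier_mat d d" "B \<in> carrier_mat d d"
  shows "tr (A * B) = tr (B * A)"
  unfolding tr2[OF assms] tr2[OF assms(2,1)] by (subst sum.swap) (simp add: mult.commute)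

lemma F3: assumes X: "X \<in> carrier_mat (2^n) (2^n)" and Y: "Y \<in> carrier_mat (2^n) (2^n)"
  shows "(\<Sum>P\<in>paulis n. tr (X * pauli_mat P) * tr (Y * pauli_mat P)) = 2^n * tr (X * Y)"
proof -
  let ?d = "2^n :: nat"
  have cP: "P \<in> paulis n \<Longrightarrow> pauli_mat P \<in> carrier_mat ?d ?d" for P
    using pauli_carrier[of P] by (simp add: paulis_def)
  have "(\<Sum>P\<in>paulis n. tr (X * pauli_mat P) * tr (Y * pauli_mat P))
     = (\<Sum>P\<in>paulis n. \<Sum>i<?d. \<Sum>j<?d. \<Sum>k<?d. \<Sum>l<?d. X $$ (i,k) * (Y $$ (j,l) * (pauli_mat P $$ (k,i) * pauli_mat P $$ (l,j))))"
    by (intro sum.cong refl) (simp add: tr2[OF X cP] tr2[OF Y cP] sum_product ac_simps)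
  also have "\<dots> = (\<Sum>i<?d. \<Sum>j<?d. \<Sum>k<?d. \<Sum>l<?d. X $$ (i,k) * (Y $$ (j,l) * (\<Sum>P\<in>paulis n. pauli_mat P $$ (k,i) * pauli_mat P $$ (l,j))))"
    by (simp add: sum.swap[where A="paulis n"] sum_distrib_left)
  also have "\<dots> = (\<Sum>i<?d. \<Sum>j<?d. \<Sum>k<?d. \<Sum>l<?d. if k = j \<and> i = l then X $$ (i,k) * (Y $$ (j,l) * of_nat ?d) else 0)"
    by (intro sum.cong refl) (simp add: pauli_complete)
  also have "\<dots> = (\<Sum>i<?d. \<Sum>j<?d. X $$ (i,j) * (Y $$ (j,i) * of_nat ?d))"
    by (intro sum.cong refl) (simp add: H1)
  also have "\<dots> = of_nat ?d * tr (X * Y)"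
    by (simp add: tr2[OF X Y] sum_distrib_left sum_distrib_right ac_simps)
  finally show ?thesis by simp
qed

lemma Fconj: assumes X: "X \<in> carrier_mat (2^n) (2^n)" and Y: "Y \<in> carrier_mat (2^n) (2^n)"
  shows "(\<Sum>P\<in>paulis n. tr (Y * pauli_mat P * X * pauli_mat P)) = 2^n * tr Y * tr X"
proof -
  let ?d = "2^n :: nat"
  have cP: "P \<in> paulis n \<Longrightarrow> pauli_mat P \<in> carrier_mat ?d ?d" for P
    using pauli_carrier[of P] by (simp add: paulis_def)
  have "(\<Sum>P\<in>paulis n. tr (Y * pauli_mat P * X * pauli_mat P))
     = (\<Sum>P\<in>paulis n. \<Sum>a<?d. \<Sum>e<?d. \<Sum>c<?d. \<Sum>b<?d. Y $$ (a,b) * X $$ (c,e) * (pauli_mat P $$ (b,c) * pauli_mat P $$ (e,a)))"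
    by (intro sum.cong refl) (simp add: tr4[OF Y cP X cP] ac_simps)
  also have "\<dots> = (\<Sum>a<?d. \<Sum>e<?d. \<Sum>c<?d. \<Sum>b<?d. Y $$ (a,b) * X $$ (c,e) * (\<Sum>P\<in>paulis n. pauli_mat P $$ (b,c) * pauli_mat P $$ (e,a)))"
    by (simp add: sum.swap[where A="paulis n"] sum_distrib_left)
  also have "\<dots> = (\<Sum>a<?d. \<Sum>e<?d. \<Sum>c<?d. \<Sum>b<?d. if b = a \<and> c = e then Y $$ (a,b) * X $$ (c,e) * of_nat ?d else 0)"
    by (intro sum.cong refl) (simp add: pauli_complete)
  also have "\<dots> = (\<Sum>a<?d. \<Sum>e<?d. Y $$ (a,a) * X $$ (e,e) * of_nat ?d)"
    by (intro sum.cong refl) (simp add: H2)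
  also have "\<dots> = of_nat ?d * tr Y * tr X"
    using X Y by (simp add: tr_def sum_distrib_left sum_distrib_right sum_product ac_simps)
  finally show ?thesis by simp
qed



lemma mc: "A \<in> carrier_mat d d \<Longrightarrow> B \<in> carrier_mat d d \<Longrightarrow> A * B \<in> carrier_mat d d"
  by (rule mult_carrier_mat)

lemma assoc_d: "A \<in> carrier_mat d d \<Longrightarrow> B \<in> carrier_mat d d \<Longrightarrow> C \<in> carrier_mat d d \<Longrightarrow> A * B * C = A * (B * C)"
  by (rule assoc_mult_mat)

lemma tr_smult: "A \<in> carrier_mat d d \<Longrightarrow> tr (c \<cdot>\<^sub>m A) = c * tr A"
  by (simp add: tr_def sum_distrib_left)

lemma cPn: "P \<in> paulis n \<Longrightarrow> pauli_mat P \<in> carrier_mat (2^n) (2^n)"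
  using pauli_carrier[of P] by (simp add: paulis_def)

lemma PPX: assumes "P \<in> paulis n" "X \<in> carrier_mat (2^n) (2^n)"
  shows "pauli_mat P * (pauli_mat P * X) = X"
proof -
  have "pauli_mat P * (pauli_mat P * X) = (pauli_mat P * pauli_mat P) * X"
    using assoc_d[OF cPn[OF assms(1)] cPn[OF assms(1)] assms(2), symmetric] .
  also have "\<dots> = X" using assms by (simp add: pauli_sq paulis_def)
  finally show ?thesis .
qed

lemma conj_n: assumes "P \<in> paulis n" "Q \<in> paulis n"
  shows "pauli_mat P * pauli_mat Q * pauli_mat P = complex_of_real (chi P Q) \<cdot>\<^sub>m pauli_mat Q"
  using assms by (intro pauli_conj) (simp add: paulis_def)

lemma F1: assumes A: "A \<in> carrier_mat (2^n) (2^n)" and B: "B \<in> carrier_mat (2^n) (2^n)" and P: "P \<in> paulis n"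
  shows "2^n * tr (A * pauli_mat P * B * pauli_mat P) =
     (\<Sum>Q\<in>paulis n. complex_of_real (chi P Q) * (tr (A * pauli_mat Q) * tr (B * pauli_mat Q)))"
proof -
  let ?P = "pauli_mat P"
  have cP: "?P \<in> carrier_mat (2^n) (2^n)" using P by (rule cPn)
  have C: "?P * B * ?P \<in> carrier_mat (2^n) (2^n)" using cP B by (intro mc)
  have step: "tr ((?P * B * ?P) * pauli_mat Q) = complex_of_real (chi P Q) * tr (B * pauli_mat Q)"
    if Q: "Q \<in> paulis n" for Q
  proof -
    have cQ: "pauli_mat Q \<in> carrier_mat (2^n) (2^n)" using Q by (rule cPn)
    have "tr ((?P * B * ?P) * pauli_mat Q) = tr (?P * (B * ?P * pauli_mat Q))"
      using cP B cQ by (simp add: assoc_d mc)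
    also have "\<dots> = tr ((B * ?P * pauli_mat Q) * ?P)"
      using cP B cQ by (intro tr_comm) (auto intro: mc)
    also have "\<dots> = tr (B * (?P * pauli_mat Q * ?P))"
      using cP B cQ by (simp add: assoc_d mc)
    also have "\<dots> = tr (B * (complex_of_real (chi P Q) \<cdot>\<^sub>m pauli_mat Q))"
      by (simp add: conj_n[OF P Q])
    also have "\<dots> = complex_of_real (chi P Q) * tr (B * pauli_mat Q)"
      using B cQ by (simp add: mult_smult_distrib tr_smult[OF mc[OF B cQ]])
    finally show ?thesis .
  qed
  have "(\<Sum>Q\<in>paulis n. complex_of_real (chi P Q) * (tr (A * pauli_mat Q) * tr (B * pauli_mat Q)))
      = (\<Sum>Q\<in>paulis n. tr (A * pauli_mat Q) * tr ((?P * B * ?P) * pauli_mat Q))"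
    by (intro sum.cong refl) (simp add: step)
  also have "\<dots> = 2^n * tr (A * (?P * B * ?P))" by (rule F3[OF A C])
  also have "A * (?P * B * ?P) = A * ?P * B * ?P" using A B cP by (simp add: assoc_d mc)
  finally show ?thesis by simp
qed

lemma F2c: assumes Q: "Q \<in> paulis n" and R: "R \<in> paulis n"
  shows "(\<Sum>P\<in>paulis n. complex_of_real (chi P Q * chi P R)) = (if Q = R then 2^n * 2^n else 0)"
proof -
  let ?Q = "pauli_mat Q" and ?R = "pauli_mat R"
  have cQ: "?Q \<in> carrier_mat (2^n) (2^n)" using Q by (rule cPn)
  have cR: "?R \<in> carrier_mat (2^n) (2^n)" using R by (rule cPn)
  have Y: "?R * ?Q \<in> carrier_mat (2^n) (2^n)" and X: "?Q * ?R \<in> carrier_mat (2^n) (2^n)"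
    using cQ cR by (auto intro: mc)
  have step: "tr (?R * ?Q * pauli_mat P * (?Q * ?R) * pauli_mat P) = complex_of_real (chi P Q * chi P R) * 2^n"
    if P: "P \<in> paulis n" for P
  proof -
    let ?P = "pauli_mat P"
    have cP: "?P \<in> carrier_mat (2^n) (2^n)" using P by (rule cPn)
    have e1: "?P * (?Q * ?R) * ?P = (?P * ?Q * ?P) * (?P * ?R * ?P)"
      using cP cQ cR by (simp add: assoc_d mc PPX[OF P])
    also have "\<dots> = complex_of_real (chi P Q * chi P R) \<cdot>\<^sub>m (?Q * ?R)"
      using cQ cR by (simp add: conj_n[OF P Q] conj_n[OF P R] mult_smult_distrib[OF cQ cR]
          mult_smult_assoc_mat[OF cQ smult_carrier_mat[OF cR]] smult_smult_mat)
    finally have e1: "?P * (?Q * ?R) * ?P = complex_of_real (chi P Q * chi P R) \<cdot>\<^sub>m (?Q * ?R)" .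
    have "?R * ?Q * ?P * (?Q * ?R) * ?P = (?R * ?Q) * (?P * (?Q * ?R) * ?P)"
      using cP cQ cR by (simp add: assoc_d mc)
    also have "\<dots> = complex_of_real (chi P Q * chi P R) \<cdot>\<^sub>m (?R * (?Q * (?Q * ?R)))"
      using cQ cR by (simp add: e1 mult_smult_distrib[OF mc[OF cR cQ] mc[OF cQ cR]] assoc_d mc)
    also have "?R * (?Q * (?Q * ?R)) = 1\<^sub>m (2^n)"
      using cQ cR R by (simp add: PPX[OF Q] pauli_sq paulis_def)
    finally show ?thesis by (simp add: tr_smult[of "1\<^sub>m (2^n)" "2^n"] tr_def)
  qed
  have "(\<Sum>P\<in>paulis n. complex_of_real (chi P Q * chi P R)) * 2^n
     = (\<Sum>P\<in>paulis n. tr (?R * ?Q * pauli_mat P * (?Q * ?R) * pauli_mat P))"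
    by (simp add: step sum_distrib_right)
  also have "\<dots> = 2^n * tr (?R * ?Q) * tr (?Q * ?R)" by (rule Fconj[OF X Y])
  also have "\<dots> = (if Q = R then 2^n * 2^n else 0) * 2^n"
    using Q R by (simp add: pauli_tr paulis_def)
  finally show ?thesis by simp
qed

lemma F2: assumes Q: "Q \<in> paulis n" and R: "R \<in> paulis n"
  shows "(\<Sum>P\<in>paulis n. chi P Q * chi P R) = (if Q = R then 2^n * 2^n else 0)"
proof -
  have "complex_of_real (\<Sum>P\<in>paulis n. chi P Q * chi P R) = complex_of_real (if Q = R then 2^n * 2^n else 0)"
    using F2c[OF Q R] by simp
  then show ?thesis using of_real_eq_iff by blast
qed



lemma XitF: assumes A: "A \<in> carrier_mat (2^n) (2^n)" and B: "B \<in> carrier_mat (2^n) (2^n)" and P: "P \<in> paulis n"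
  shows "2^n * Xit A B P = (\<Sum>Q\<in>paulis n. chi P Q * Xi2 A B Q)"
proof -
  have "Re (2^n * tr (A * pauli_mat P * B * pauli_mat P)) =
     Re (\<Sum>Q\<in>paulis n. complex_of_real (chi P Q) * (tr (A * pauli_mat Q) * tr (B * pauli_mat Q)))"
    by (simp only: F1[OF A B P])
  moreover have "Re (2^n * z) = 2^n * Re z" for z :: complex
  proof -
    have "(2::complex)^n = complex_of_real (2^n)" by simp
    then show ?thesis by simp
  qed
  ultimately show ?thesis by (simp add: Xit_def Xi2_def Re_sum)
qed

lemma sum_sq_eq: assumes A: "A \<in> carrier_mat (2^n) (2^n)" and B: "B \<in> carrier_mat (2^n) (2^n)"
  shows "(\<Sum>P\<in>paulis n. (Xit A B P)^2) = (\<Sum>P\<in>paulis n. (Xi2 A B P)^2)"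
proof -
  let ?v = "Xi2 A B"
  have "(2^n)^2 * (\<Sum>P\<in>paulis n. (Xit A B P)^2) = (\<Sum>P\<in>paulis n. (2^n * Xit A B P)^2)"
    by (simp add: sum_distrib_left power_mult_distrib)
  also have "\<dots> = (\<Sum>P\<in>paulis n. (\<Sum>Q\<in>paulis n. chi P Q * ?v Q)^2)"
    by (intro sum.cong refl) (simp only: XitF[OF A B])
  also have "\<dots> = (\<Sum>P\<in>paulis n. \<Sum>Q\<in>paulis n. \<Sum>R\<in>paulis n. ?v Q * ?v R * (chi P Q * chi P R))"
    unfolding power2_eq_square sum_product by (intro sum.cong refl) (simp only: mult_ac)
  also have "\<dots> = (\<Sum>Q\<in>paulis n. \<Sum>R\<in>paulis n. \<Sum>P\<in>paulis n. ?v Q * ?v R * (chi P Q * chi P R))"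
    by (subst sum.swap) (rule sum.cong[OF refl], rule sum.swap)
  also have "\<dots> = (\<Sum>Q\<in>paulis n. \<Sum>R\<in>paulis n. ?v Q * ?v R * (\<Sum>P\<in>paulis n. chi P Q * chi P R))"
    by (intro sum.cong refl) (rule sum_distrib_left[symmetric])
  also have "\<dots> = (\<Sum>Q\<in>paulis n. \<Sum>R\<in>paulis n. if Q = R then ?v Q * ?v R * (2^n * 2^n) else 0)"
    by (intro sum.cong refl) (simp only: F2 if_distrib[of "\<lambda>x. _ * x"] mult_zero_right)
  also have "\<dots> = (\<Sum>Q\<in>paulis n. ?v Q * ?v Q * (2^n * 2^n))"
    by (intro sum.cong refl) (simp add: paulis_finite)
  also have "\<dots> = (2^n)^2 * (\<Sum>P\<in>paulis n. (?v P)^2)"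
    by (simp only: sum_distrib_left power2_eq_square mult_ac)
  finally show ?thesis by simp
qed

lemma pnorm_sq: "(pnorm n f)^2 = (\<Sum>P\<in>paulis n. (f P)^2)"
  unfolding pnorm_def by (simp add: sum_nonneg)

lemma part1: assumes A: "A \<in> carrier_mat (2^n) (2^n)" and B: "B \<in> carrier_mat (2^n) (2^n)"
  shows "\<bar>pdot n (Xit A B) (Xi2 A B)\<bar> \<le> (pnorm n (Xit A B))^2 \<and>
         (pnorm n (Xit A B))^2 = (pnorm n (Xi2 A B))^2"
proof -
  have eq: "(pnorm n (Xit A B))^2 = (pnorm n (Xi2 A B))^2"
    unfolding pnorm_sq using sum_sq_eq[OF A B] .
  have eq1: "pnorm n (Xit A B) = pnorm n (Xi2 A B)"
    unfolding pnorm_def using sum_sq_eq[OF A B] by simp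
  have "\<bar>pdot n (Xit A B) (Xi2 A B)\<bar> \<le> (\<Sum>P\<in>paulis n. \<bar>Xit A B P\<bar> * \<bar>Xi2 A B P\<bar>)"
    unfolding pdot_def by (rule order_trans[OF sum_abs]) (simp add: abs_mult)
  also have "\<dots> \<le> L2_set (Xit A B) (paulis n) * L2_set (Xi2 A B) (paulis n)"
    by (rule L2_set_mult_ineq)
  also have "\<dots> = (pnorm n (Xit A B))^2"
  proof -
    have l: "L2_set f (paulis n) = pnorm n f" for f unfolding L2_set_def pnorm_def ..
    show ?thesis by (simp only: l eq1 power2_eq_square)
  qed
  finally show ?thesis using eq by simp
qed



lemma Re_pow2: "Re ((2::complex)^n * z) = 2^n * Re z"
proof -
  have "(2::complex)^n = complex_of_real (2^n)" by simp
  then show ?thesis by simp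
qed

lemma herm_carrier: "hermitian d X \<Longrightarrow> X \<in> carrier_mat d d"
  unfolding hermitian_def by blast

lemma herm_entry: "hermitian d X \<Longrightarrow> i < d \<Longrightarrow> j < d \<Longrightarrow> X $$ (i,j) = cnj (X $$ (j,i))"
  unfolding hermitian_def by blast

lemma herm_tr_cnj: assumes X: "hermitian (2^n) X" and P: "P \<in> paulis n"
  shows "cnj (tr (X * pauli_mat P)) = tr (X * pauli_mat P)"
proof -
  let ?d = "2^n::nat"
  have cX: "X \<in> carrier_mat ?d ?d" using X by (rule herm_carrier)
  have cP: "pauli_mat P \<in> carrier_mat ?d ?d" using P by (rule cPn)
  have lP: "length P = n" using P by (simp add: paulis_def)
  have "cnj (tr (X * pauli_mat P)) = (\<Sum>a<?d. \<Sum>b<?d. cnj (X $$ (a,b)) * cnj (pauli_mat P $$ (b,a)))"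
    by (simp add: tr2[OF cX cP])
  also have "\<dots> = (\<Sum>a<?d. \<Sum>b<?d. X $$ (b,a) * pauli_mat P $$ (a,b))"
  proof (intro sum.cong refl)
    fix a b assume "a \<in> {..<?d}" "b \<in> {..<?d}"
    then have ab: "a < ?d" "b < ?d" by auto
    have "X $$ (b,a) = cnj (X $$ (a,b))" using herm_entry[OF X ab(2,1)] .
    moreover have "pauli_mat P $$ (a,b) = cnj (pauli_mat P $$ (b,a))" by (rule pauli_herm) (use ab lP in simp_all)
    ultimately show "cnj (X $$ (a,b)) * cnj (pauli_mat P $$ (b,a)) = X $$ (b,a) * pauli_mat P $$ (a,b)" by simp
  qed
  also have "\<dots> = tr (X * pauli_mat P)"
    by (simp add: tr2[OF cX cP]) (rule sum.swap)
  finally show ?thesis .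
qed

lemma herm_tr_real: assumes X: "hermitian (2^n) X" and P: "P \<in> paulis n"
  shows "tr (X * pauli_mat P) = complex_of_real (Xi X P)"
proof -
  have "tr (X * pauli_mat P) \<in> \<real>" using herm_tr_cnj[OF X P] by (simp add: Reals_cnj_iff)
  then show ?thesis by (simp add: Xi_def of_real_Re)
qed

lemma Xi2_prod: assumes A: "hermitian (2^n) A" and B: "hermitian (2^n) B" and P: "P \<in> paulis n"
  shows "Xi2 A B P = Xi A P * Xi B P"
  unfolding Xi2_def herm_tr_real[OF A P] herm_tr_real[OF B P] by simp

lemma parseval: assumes X: "hermitian (2^n) X"
  shows "(\<Sum>P\<in>paulis n. (Xi X P)^2) = 2^n * (\<Sum>a<2^n. \<Sum>b<2^n. (cmod (X $$ (a,b)))^2)"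
proof -
  let ?d = "2^n::nat"
  have cX: "X \<in> carrier_mat ?d ?d" using X by (rule herm_carrier)
  have "(\<Sum>P\<in>paulis n. (Xi X P)^2) = Re (\<Sum>P\<in>paulis n. tr (X * pauli_mat P) * tr (X * pauli_mat P))"
    by (simp add: Re_sum herm_tr_real[OF X] power2_eq_square)
  also have "\<dots> = Re (2^n * tr (X * X))" by (simp only: F3[OF cX cX])
  also have "tr (X * X) = (\<Sum>a<?d. \<Sum>b<?d. complex_of_real ((cmod (X $$ (a,b)))^2))"
  proof -
    have "tr (X * X) = (\<Sum>a<?d. \<Sum>b<?d. X $$ (a,b) * X $$ (b,a))" by (rule tr2[OF cX cX])
    also have "\<dots> = (\<Sum>a<?d. \<Sum>b<?d. complex_of_real ((cmod (X $$ (a,b)))^2))"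
    proof (intro sum.cong refl)
      fix a b assume "a \<in> {..<?d}" "b \<in> {..<?d}"
      then have ab: "a < ?d" "b < ?d" by auto
      have "X $$ (b,a) = cnj (X $$ (a,b))" using herm_entry[OF X ab(2,1)] .
      then show "X $$ (a,b) * X $$ (b,a) = complex_of_real ((cmod (X $$ (a,b)))^2)"
        using complex_norm_square[of "X $$ (a,b)"] by simp
    qed
    finally show ?thesis .
  qed
  finally show ?thesis by (simp add: Re_pow2 Re_sum)
qed

lemma hs_norm_sq: assumes "X \<in> carrier_mat d d"
  shows "(hs_norm X)^2 = (\<Sum>a<d. \<Sum>b<d. (cmod (X $$ (a,b)))^2)"
  using assms unfolding hs_norm_def by (simp add: sum_nonneg)



lemma qform: assumes R: "R \<in> carrier_mat d d" and v: "v \<in> carrier_vec d"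
  shows "(R *\<^sub>v v) \<bullet>c v = (\<Sum>i<d. \<Sum>j<d. R $$ (i,j) * v $ j * cnj (v $ i))"
  using R v by (simp add: scalar_prod_def atLeast0LessThan sum_distrib_right mult_mat_vec_def)

lemma psd_q: "psd d R \<Longrightarrow> v \<in> carrier_vec d \<Longrightarrow> 0 \<le> Re (\<Sum>i<d. \<Sum>j<d. R $$ (i,j) * v $ j * cnj (v $ i))"
proof -
  assume p: "psd d R" and v: "v \<in> carrier_vec d"
  have R: "R \<in> carrier_mat d d" using p by (simp add: psd_def)
  have "0 \<le> Re ((R *\<^sub>v v) \<bullet>c v)" using p v unfolding psd_def by blast
  then show ?thesis by (simp only: qform[OF R v])
qed

lemma sum_2pt: assumes "a \<noteq> b" "a < d" "b < d"
  shows "(\<Sum>j<(d::nat). g j * (if j = a then x else if j = b then y else 0)) = g a * x + g b * (y::complex)"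
proof -
  have "(\<Sum>j<d. g j * (if j = a then x else if j = b then y else 0)) =
        (\<Sum>j<d. (if j = a then g j * x else 0) + (if j = b then g j * y else 0))"
    using assms by (intro sum.cong refl) auto
  also have "\<dots> = g a * x + g b * y" using assms by (simp add: sum.distrib)
  finally show ?thesis .
qed

lemma sum_2pt': assumes "a \<noteq> b" "a < d" "b < d"
  shows "(\<Sum>j<(d::nat). g j * cnj (if j = a then x else if j = b then y else 0)) = g a * cnj x + g b * cnj (y::complex)"
proof -
  have "(\<Sum>j<d. g j * cnj (if j = a then x else if j = b then y else 0)) =
        (\<Sum>j<d. (if j = a then g j * cnj x else 0) + (if j = b then g j * cnj y else 0))"
    using assms by (intro sum.cong refl) auto
  also have "\<dots> = g a * cnj x + g b * cnj y" using assms by (simp add: sum.distrib)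
  finally show ?thesis .
qed

lemma quad2: assumes R: "psd d R" and ab: "a \<noteq> b" "a < d" "b < d"
  shows "0 \<le> Re (R $$ (a,a) * x * cnj x + R $$ (a,b) * y * cnj x + R $$ (b,a) * x * cnj y + R $$ (b,b) * y * cnj y)"
proof -
  define v where "v = vec d (\<lambda>k. if k = a then x else if k = b then y else 0)"
  have v: "v \<in> carrier_vec d" by (simp add: v_def)
  have "(\<Sum>i<d. \<Sum>j<d. R $$ (i,j) * v $ j * cnj (v $ i)) =
        (\<Sum>i<d. (\<Sum>j<d. R $$ (i,j) * (if j = a then x else if j = b then y else 0)) * cnj (if i = a then x else if i = b then y else 0))"
    by (intro sum.cong refl) (simp add: v_def sum_distrib_right)
  also have "\<dots> = (\<Sum>i<d. (R $$ (i,a) * x + R $$ (i,b) * y) * cnj (if i = a then x else if i = b then y else 0))"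
    by (intro sum.cong refl) (simp only: sum_2pt[OF ab])
  also have "\<dots> = (R $$ (a,a) * x + R $$ (a,b) * y) * cnj x + (R $$ (b,a) * x + R $$ (b,b) * y) * cnj y"
    by (rule sum_2pt'[OF ab])
  finally show ?thesis using psd_q[OF R v] by (simp add: algebra_simps)
qed

lemma diag_nonneg: assumes R: "psd d R" and a: "a < d"
  shows "0 \<le> Re (R $$ (a,a))"
proof -
  define v where "v = vec d (\<lambda>k. if k = a then 1 else (0::complex))"
  have v: "v \<in> carrier_vec d" by (simp add: v_def)
  have "(\<Sum>i<d. \<Sum>j<d. R $$ (i,j) * v $ j * cnj (v $ i)) = (\<Sum>i<d. if i = a then R $$ (a,a) else 0)"
    by (intro sum.cong refl) (auto simp: v_def a if_distrib[of "\<lambda>x. _ * x"] cong: if_cong)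
  also have "\<dots> = R $$ (a,a)" using a by simp
  finally show ?thesis using psd_q[OF R v] by simp
qed

lemma minor: assumes H: "hermitian d R" and R: "psd d R" and a: "a < d" and b: "b < d"
  shows "(cmod (R $$ (a,b)))^2 \<le> Re (R $$ (a,a)) * Re (R $$ (b,b))"
proof (cases "a = b")
  case True
  have "R $$ (a,a) = cnj (R $$ (a,a))" using herm_entry[OF H a a] .
  then have "Im (R $$ (a,a)) = Im (cnj (R $$ (a,a)))" by simp
  then have "Im (R $$ (a,a)) = 0" by simp
  then show ?thesis using True by (simp add: cmod_def power2_eq_square)
next
  case False
  define c where "c = R $$ (b,a)"
  define s where "s = (cmod c)^2"
  define A where "A = Re (R $$ (a,a))"
  define B where "B = Re (R $$ (b,b))"
  have A0: "A \<ge> 0" unfolding A_def by (rule diag_nonneg[OF R a])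
  have s0: "s \<ge> 0" unfolding s_def by simp
  have B0: "B \<ge> 0" unfolding B_def by (rule diag_nonneg[OF R b])
  have rab: "R $$ (a,b) = cnj c" unfolding c_def using herm_entry[OF H a b] .
  have key: "0 \<le> A * t^2 - 2 * t * s + B * s" for t :: real
  proof -
    have q: "0 \<le> Re (R $$ (a,a) * complex_of_real t * cnj (complex_of_real t) + R $$ (a,b) * (- c) * cnj (complex_of_real t)
        + R $$ (b,a) * complex_of_real t * cnj (- c) + R $$ (b,b) * (- c) * cnj (- c))"
      by (rule quad2[OF R False a b])
    have cc: "c * cnj c = complex_of_real s" unfolding s_def using complex_norm_square[of c] by simp
    have t2: "cnj c * (- c) * cnj (complex_of_real t) = - (c * cnj c) * complex_of_real t"
      by (simp add: algebra_simps)
    have t3: "c * complex_of_real t * cnj (- c) = - (c * cnj c) * complex_of_real t"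
      by (simp add: algebra_simps)
    have t4: "R $$ (b,b) * (- c) * cnj (- c) = R $$ (b,b) * (c * cnj c)"
      by (simp add: algebra_simps)
    have "R $$ (a,a) * complex_of_real t * cnj (complex_of_real t) + R $$ (a,b) * (- c) * cnj (complex_of_real t)
        + R $$ (b,a) * complex_of_real t * cnj (- c) + R $$ (b,b) * (- c) * cnj (- c)
        = R $$ (a,a) * complex_of_real (t * t) - complex_of_real s * complex_of_real t - complex_of_real s * complex_of_real t + R $$ (b,b) * complex_of_real s"
      unfolding rab c_def[symmetric] t2 t3 t4 cc by simp
    then have "0 \<le> Re (R $$ (a,a) * complex_of_real (t * t) - complex_of_real s * complex_of_real t - complex_of_real s * complex_of_real t + R $$ (b,b) * complex_of_real s)"
      using q by (simp only:)
    moreover have "Re (R $$ (a,a) * complex_of_real (t * t) - complex_of_real s * complex_of_real t - complex_of_real s * complex_of_real t + R $$ (b,b) * complex_of_real s)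
       = A * t^2 - 2 * t * s + B * s"
      by (simp add: A_def B_def power2_eq_square)
    ultimately show ?thesis by linarith
  qed
  have "s \<le> A * B"
  proof (cases "A = 0")
    case True
    have "0 \<le> A * (B+1)^2 - 2 * (B+1) * s + B * s" by (rule key)
    then have "s * (B + 2) \<le> 0 * (B + 2)" using True by (simp add: algebra_simps)
    moreover have "B + 2 > 0" using B0 by simp
    ultimately have "s \<le> 0" using mult_le_cancel_right_pos by blast
    then have "s = 0" using s0 by simp
    then show ?thesis using A0 B0 by simp
  next
    case False
    then have Ap: "A > 0" using A0 by simp
    have "0 \<le> A * (s/A)^2 - 2 * (s/A) * s + B * s" by (rule key)
    then have "0 \<le> B * s - s^2 / A" using Ap by (simp add: power2_eq_square field_simps)
    then have "s^2 \<le> A * B * s" using Ap by (simp add: field_simps)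
    show ?thesis
    proof (cases "s = 0")
      case True then show ?thesis using A0 B0 by simp
    next
      case False
      then have sp: "s > 0" using s0 by simp
      have "s * s \<le> (A * B) * s" using \<open>s^2 \<le> A * B * s\<close> by (simp add: power2_eq_square)
      then show ?thesis using sp mult_le_cancel_right_pos by blast
    qed
  qed
  moreover have "(cmod (R $$ (a,b)))^2 = s" unfolding rab s_def by simp
  ultimately show ?thesis by (simp add: A_def B_def)
qed



lemma tr_add: "A \<in> carrier_mat d d \<Longrightarrow> B \<in> carrier_mat d d \<Longrightarrow> tr (A + B) = tr A + tr B"
  by (simp add: tr_def sum.distrib)

lemma purity: assumes D: "density (2^n) R"
  shows "(\<Sum>P\<in>paulis n. (Xi R P)^2) \<le> 2^n"
proof -
  let ?d = "2^n :: nat"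
  have H: "hermitian ?d R" and Ps: "psd ?d R" and T: "tr R = 1" using D by (auto simp: density_def)
  have cR: "R \<in> carrier_mat ?d ?d" using H by (rule herm_carrier)
  have "(\<Sum>P\<in>paulis n. (Xi R P)^2) = 2^n * (\<Sum>a<?d. \<Sum>b<?d. (cmod (R $$ (a,b)))^2)"
    by (rule parseval[OF H])
  also have "\<dots> \<le> 2^n * (\<Sum>a<?d. \<Sum>b<?d. Re (R $$ (a,a)) * Re (R $$ (b,b)))"
    by (intro mult_left_mono sum_mono minor[OF H Ps]) auto
  also have "(\<Sum>a<?d. \<Sum>b<?d. Re (R $$ (a,a)) * Re (R $$ (b,b))) = (Re (tr R))^2"
    using cR by (simp add: tr_def Re_sum power2_eq_square sum_product)
  finally show ?thesis using T by simp
qed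

lemma psd_trMM: assumes Ps: "psd d R" and H: "hermitian d M"
  shows "0 \<le> Re (tr (R * (M * M)))"
proof -
  have cR: "R \<in> carrier_mat d d" using Ps by (simp add: psd_def)
  have cM: "M \<in> carrier_mat d d" using H by (rule herm_carrier)
  have each: "0 \<le> Re (\<Sum>i<d. \<Sum>j<d. R $$ (i,j) * M $$ (j,k) * M $$ (k,i))" if k: "k < d" for k
  proof -
    have v: "col M k \<in> carrier_vec d" using cM by (intro carrier_vecI) (simp add: carrier_matD)
    have "(\<Sum>i<d. \<Sum>j<d. R $$ (i,j) * col M k $ j * cnj (col M k $ i)) =
          (\<Sum>i<d. \<Sum>j<d. R $$ (i,j) * M $$ (j,k) * M $$ (k,i))"
    proof (intro sum.cong refl)
      fix i j assume "i \<in> {..<d}" "j \<in> {..<d}"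
      then have ij: "i < d" "j < d" by auto
      have "M $$ (k,i) = cnj (M $$ (i,k))" using herm_entry[OF H k ij(1)] .
      then show "R $$ (i,j) * col M k $ j * cnj (col M k $ i) = R $$ (i,j) * M $$ (j,k) * M $$ (k,i)"
        using ij k cM by simp
    qed
    then show ?thesis using psd_q[OF Ps v] by simp
  qed
  have "tr (R * (M * M)) = (\<Sum>i<d. \<Sum>j<d. R $$ (i,j) * (M * M) $$ (j,i))"
    by (rule tr2[OF cR mc[OF cM cM]])
  also have "\<dots> = (\<Sum>i<d. \<Sum>j<d. \<Sum>k<d. R $$ (i,j) * M $$ (j,k) * M $$ (k,i))"
    by (intro sum.cong refl) (simp add: mult_entry[OF cM cM] sum_distrib_left mult.assoc)
  also have "\<dots> = (\<Sum>k<d. \<Sum>i<d. \<Sum>j<d. R $$ (i,j) * M $$ (j,k) * M $$ (k,i))"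
    by (subst sum.swap) (rule sum.cong[OF refl], rule sum.swap)
  finally have "Re (tr (R * (M * M))) = (\<Sum>k<d. Re (\<Sum>i<d. \<Sum>j<d. R $$ (i,j) * M $$ (j,k) * M $$ (k,i)))"
    by (simp add: Re_sum)
  also have "\<dots> \<ge> 0" using each by (intro sum_nonneg) auto
  finally show ?thesis .
qed

lemma Xi_bound_s: assumes D: "density (2^n) R" and P: "P \<in> paulis n" and s: "s = 1 \<or> s = -1"
  shows "0 \<le> 1 + s * Xi R P"
proof -
  let ?d = "2^n :: nat"
  have H: "hermitian ?d R" and Ps: "psd ?d R" and T: "tr R = 1" using D by (auto simp: density_def)
  have cR: "R \<in> carrier_mat ?d ?d" using H by (rule herm_carrier)
  let ?P = "pauli_mat P"
  have cP: "?P \<in> carrier_mat ?d ?d" using P by (rule cPn)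
  have lP: "length P = n" using P by (simp add: paulis_def)
  let ?I = "1\<^sub>m ?d :: complex mat"
  let ?Q = "complex_of_real s \<cdot>\<^sub>m ?P"
  have cQ: "?Q \<in> carrier_mat ?d ?d" using cP by simp
  have cI: "?I \<in> carrier_mat ?d ?d" by simp
  let ?M = "?I + ?Q"
  have cM: "?M \<in> carrier_mat ?d ?d" using cQ by simp
  have HM: "hermitian ?d ?M"
    unfolding hermitian_def
  proof (intro conjI allI impI cM)
    fix i j assume ij: "i < ?d" "j < ?d"
    have "?P $$ (i,j) = cnj (?P $$ (j,i))" by (rule pauli_herm) (use ij lP in simp_all)
    then show "?M $$ (i,j) = cnj (?M $$ (j,i))" using ij lP by simp
  qed
  have ss: "complex_of_real s * complex_of_real s = 1" using s by auto
  have QQ: "?Q * ?Q = ?I"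
  proof -
    have "?Q * ?Q = complex_of_real s \<cdot>\<^sub>m (?P * ?Q)" by (rule mult_smult_assoc_mat[OF cP cQ])
    also have "?P * ?Q = complex_of_real s \<cdot>\<^sub>m (?P * ?P)" by (rule mult_smult_distrib[OF cP cP])
    also have "?P * ?P = ?I" using lP by (simp add: pauli_sq)
    also have "complex_of_real s \<cdot>\<^sub>m (complex_of_real s \<cdot>\<^sub>m ?I) = ?I"
      by (simp add: smult_smult_mat ss) (rule eq_matI, auto)
    finally show ?thesis .
  qed
  have MM: "?M * ?M = 2 \<cdot>\<^sub>m ?M"
  proof -
    have "?M * ?M = ?I * ?M + ?Q * ?M" by (rule add_mult_distrib_mat[OF cI cQ cM])
    also have "?I * ?M = ?M" using cM by (rule left_mult_one_mat)
    also have "?Q * ?M = ?Q * ?I + ?Q * ?Q" by (rule mult_add_distrib_mat[OF cQ cI cQ])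
    also have "?Q * ?I = ?Q" using cQ by (rule right_mult_one_mat)
    finally have "?M * ?M = ?M + (?Q + ?I)" using QQ by simp
    also have "\<dots> = 2 \<cdot>\<^sub>m ?M" by (rule eq_matI) (use cP in auto)
    finally show ?thesis .
  qed
  have "tr (R * ?M) = tr R + complex_of_real s * tr (R * ?P)"
  proof -
    have "R * ?M = R * ?I + R * ?Q" by (rule mult_add_distrib_mat[OF cR cI cQ])
    moreover have "R * ?I = R" using cR by (rule right_mult_one_mat)
    moreover have "R * ?Q = complex_of_real s \<cdot>\<^sub>m (R * ?P)" by (rule mult_smult_distrib[OF cR cP])
    ultimately show ?thesis using cR cP by (simp add: tr_add[OF cR] tr_smult[OF mc[OF cR cP]])
  qed
  then have e: "tr (R * (?M * ?M)) = 2 * (1 + complex_of_real s * complex_of_real (Xi R P))"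
    using T cR cM by (simp add: MM mult_smult_distrib[OF cR cM] tr_smult[OF mc[OF cR cM]] herm_tr_real[OF H P])
  have "0 \<le> Re (tr (R * (?M * ?M)))" by (rule psd_trMM[OF Ps HM])
  then show ?thesis unfolding e by simp
qed

lemma Xi_bound: assumes D: "density (2^n) R" and P: "P \<in> paulis n"
  shows "(Xi R P)^2 \<le> 1"
proof -
  have "0 \<le> 1 + 1 * Xi R P" by (rule Xi_bound_s[OF D P]) simp
  moreover have "0 \<le> 1 + (-1) * Xi R P" by (rule Xi_bound_s[OF D P]) simp
  ultimately have "\<bar>Xi R P\<bar> \<le> 1" by simp
  then show ?thesis by (simp add: abs_le_square_iff[of _ 1, simplified] power2_eq_square abs_le_iff)
     (smt (verit) mult_le_one mult_minus_left mult_minus_right)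
qed



lemma top_sum_attained:
  assumes S: "finite S" and k: "k \<le> card S"
  shows "\<exists>T. T \<subseteq> S \<and> card T = k \<and> top_sum k f S = (\<Sum>x\<in>T. f x) \<and>
     (\<forall>T'. T' \<subseteq> S \<and> card T' = k \<longrightarrow> (\<Sum>x\<in>T'. f x) \<le> top_sum k f S)"
proof -
  let ?F = "{(\<Sum>x\<in>T. f x) | T. T \<subseteq> S \<and> card T = k}"
  have fin: "finite ?F"
  proof -
    have "?F \<subseteq> (\<lambda>T. \<Sum>x\<in>T. f x) ` Pow S" by auto
    then show ?thesis using S by (meson finite_Pow_iff finite_imageI finite_subset)
  qed
  obtain T0 where "T0 \<subseteq> S" "card T0 = k" using obtain_subset_with_card_n[OF k] by metis
  then have ne: "?F \<noteq> {}" by auto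
  have "top_sum k f S \<in> ?F" unfolding top_sum_def using Max_in[OF fin ne] .
  then obtain T where T: "T \<subseteq> S" "card T = k" "top_sum k f S = (\<Sum>x\<in>T. f x)" by auto
  moreover have "\<forall>T'. T' \<subseteq> S \<and> card T' = k \<longrightarrow> (\<Sum>x\<in>T'. f x) \<le> top_sum k f S"
    unfolding top_sum_def using fin by (auto intro!: Max_ge)
  ultimately show ?thesis by blast
qed

lemma top_sum_le_total:
  assumes S: "finite S" and k: "k \<le> card S" and f0: "\<And>x. x \<in> S \<Longrightarrow> 0 \<le> f x"
  shows "top_sum k f S \<le> (\<Sum>x\<in>S. f x)"
proof -
  obtain T where T: "T \<subseteq> S" "top_sum k f S = (\<Sum>x\<in>T. f x)"
    using top_sum_attained[OF S k, of f] by blast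
  then show ?thesis using S f0 by (metis DiffD1 sum_mono2)
qed

lemma top_sum_weighted:
  assumes S: "finite S" and k: "k \<le> card S" and k1: "1 \<le> k"
    and f0: "\<And>x. x \<in> S \<Longrightarrow> 0 \<le> f x"
    and w0: "\<And>x. x \<in> S \<Longrightarrow> 0 \<le> w x" and w1: "\<And>x. x \<in> S \<Longrightarrow> w x \<le> 1"
    and ws: "(\<Sum>x\<in>S. w x) \<le> real k"
  shows "(\<Sum>x\<in>S. w x * f x) \<le> top_sum k f S"
proof -
  obtain T where T: "T \<subseteq> S" "card T = k" "top_sum k f S = (\<Sum>x\<in>T. f x)"
    and mx: "\<And>T'. T' \<subseteq> S \<Longrightarrow> card T' = k \<Longrightarrow> (\<Sum>x\<in>T'. f x) \<le> top_sum k f S"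
    using top_sum_attained[OF S k, of f] by blast
  have finT: "finite T" using T(1) S finite_subset by blast
  have neT: "T \<noteq> {}" using T(2) k1 by auto
  have exch: "f y \<le> f x" if x: "x \<in> T" and y: "y \<in> S - T" for x y
  proof (rule ccontr)
    assume "\<not> f y \<le> f x"
    then have lt: "f x < f y" by simp
    let ?T' = "insert y (T - {x})"
    have sub: "?T' \<subseteq> S" using T(1) x y by auto
    have cT': "card ?T' = k" using finT x y T(2) k1 by (simp add: card_insert_if)
    have "(\<Sum>z\<in>?T'. f z) = f y + (\<Sum>z\<in>T - {x}. f z)" using finT y by simp
    also have "(\<Sum>z\<in>T - {x}. f z) = (\<Sum>z\<in>T. f z) - f x" using finT x by (simp add: sum_diff1)
    finally have "(\<Sum>z\<in>?T'. f z) > (\<Sum>z\<in>T. f z)" using lt by simp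
    moreover have "(\<Sum>z\<in>?T'. f z) \<le> (\<Sum>z\<in>T. f z)" using mx[OF sub cT'] T(3) by simp
    ultimately show False by simp
  qed
  define t where "t = Min (f ` T)"
  have tle: "t \<le> f x" if "x \<in> T" for x using finT that unfolding t_def by simp
  have tge: "f y \<le> t" if "y \<in> S - T" for y
    using finT neT exch that unfolding t_def by (auto intro: Min.boundedI)
  have t0: "0 \<le> t" using finT neT f0 T(1) unfolding t_def by (auto intro: Min.boundedI)
  have split: "(\<Sum>x\<in>S. g x) = (\<Sum>x\<in>S - T. g x) + (\<Sum>x\<in>T. g x)" for g :: "_ \<Rightarrow> real"
    using T(1) S by (rule sum.subset_diff)
  have "(\<Sum>x\<in>S - T. w x * f x) \<le> (\<Sum>x\<in>S - T. w x * t)"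
    using w0 tge by (intro sum_mono mult_left_mono) auto
  also have "\<dots> = t * (\<Sum>x\<in>S - T. w x)" by (simp add: sum_distrib_left mult.commute)
  also have "(\<Sum>x\<in>S - T. w x) \<le> (\<Sum>x\<in>T. 1 - w x)"
  proof -
    have "(\<Sum>x\<in>T. 1 - w x) = real k - (\<Sum>x\<in>T. w x)" using T(2) by (simp add: sum_subtractf)
    then show ?thesis using split[of w] ws by simp
  qed
  then have "t * (\<Sum>x\<in>S - T. w x) \<le> t * (\<Sum>x\<in>T. 1 - w x)" using t0 by (rule mult_left_mono)
  finally have A: "(\<Sum>x\<in>S - T. w x * f x) \<le> (\<Sum>x\<in>T. t * (1 - w x))" by (simp add: sum_distrib_left)
  have B: "(\<Sum>x\<in>T. t * (1 - w x)) \<le> (\<Sum>x\<in>T. f x * (1 - w x))"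
    using tle w1 T(1) by (intro sum_mono mult_right_mono) auto
  have "(\<Sum>x\<in>S. w x * f x) = (\<Sum>x\<in>S - T. w x * f x) + (\<Sum>x\<in>T. w x * f x)" by (rule split)
  also have "\<dots> \<le> (\<Sum>x\<in>T. f x * (1 - w x)) + (\<Sum>x\<in>T. w x * f x)" using A B by simp
  also have "\<dots> = (\<Sum>x\<in>T. f x)" by (simp add: sum.distrib[symmetric] algebra_simps)
  finally show ?thesis using T(3) by simp
qed



theorem mainTheorem17:
  fixes n :: nat
  assumes "n \<ge> 1"
  defines "d \<equiv> 2 ^ n"
  shows "(\<forall>O1 O2. hermitian d O1 \<and> hermitian d O2 \<longrightarrow>
            \<bar>pdot n (Xit O1 O2) (Xi2 O1 O2)\<bar> \<le> (pnorm n (Xit O1 O2))^2 \<and>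
            (pnorm n (Xit O1 O2))^2 = (pnorm n (Xi2 O1 O2))^2)
       \<and> (\<forall>\<rho> Ob. density d \<rho> \<and> hermitian d Ob \<and> tr Ob = 0 \<longrightarrow>
            \<bar>pdot n (Xit \<rho> Ob) (Xi2 \<rho> Ob)\<bar> \<le> (pnorm n (Xit \<rho> Ob))^2 \<and>
            (pnorm n (Xit \<rho> Ob))^2 = (pnorm n (Xi2 \<rho> Ob))^2 \<and>
            (pnorm n (Xi2 \<rho> Ob))^2 \<le> top_sum d (\<lambda>P. (Xi Ob P)^2) (paulis n) \<and>
            top_sum d (\<lambda>P. (Xi Ob P)^2) (paulis n) \<le> (pnorm n (Xi Ob))^2 \<and>
            (pnorm n (Xi Ob))^2 = real d * (hs_norm Ob)^2)"
proof -
  have dd: "d = 2^n" by (simp add: d_def)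
  have P1: "\<bar>pdot n (Xit A B) (Xi2 A B)\<bar> \<le> (pnorm n (Xit A B))^2 \<and>
         (pnorm n (Xit A B))^2 = (pnorm n (Xi2 A B))^2" if "hermitian d A" "hermitian d B" for A B
    using part1[of A n B] herm_carrier[OF that(1)] herm_carrier[OF that(2)] unfolding dd by blast
  have P2: "(pnorm n (Xi2 R Ob))^2 \<le> top_sum d (\<lambda>P. (Xi Ob P)^2) (paulis n) \<and>
            top_sum d (\<lambda>P. (Xi Ob P)^2) (paulis n) \<le> (pnorm n (Xi Ob))^2 \<and>
            (pnorm n (Xi Ob))^2 = real d * (hs_norm Ob)^2"
    if D: "density d R" and H: "hermitian d Ob" for R Ob
  proof -
    have D': "density (2^n) R" using D dd by simp
    have H': "hermitian (2^n) Ob" using H dd by simp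
    have HR: "hermitian (2^n) R" using D' by (simp add: density_def)
    have kc: "d \<le> card (paulis n)"
    proof -
      have "(2::nat)^n \<le> 4^n" by (rule power_mono) auto
      then show ?thesis by (simp add: paulis_card dd)
    qed
    have k1: "1 \<le> d" by (simp add: dd)
    have "(pnorm n (Xi2 R Ob))^2 = (\<Sum>P\<in>paulis n. (Xi R P)^2 * (Xi Ob P)^2)"
      unfolding pnorm_sq by (intro sum.cong refl) (simp add: Xi2_prod[OF HR H'] power_mult_distrib)
    also have "\<dots> \<le> top_sum d (\<lambda>P. (Xi Ob P)^2) (paulis n)"
    proof (rule top_sum_weighted[OF paulis_finite kc k1])
      show "(\<Sum>P\<in>paulis n. (Xi R P)^2) \<le> real d" using purity[OF D'] dd by simp
    qed (auto simp: Xi_bound[OF D'])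
    finally have a: "(pnorm n (Xi2 R Ob))^2 \<le> top_sum d (\<lambda>P. (Xi Ob P)^2) (paulis n)" .
    have b: "top_sum d (\<lambda>P. (Xi Ob P)^2) (paulis n) \<le> (pnorm n (Xi Ob))^2"
      unfolding pnorm_sq by (rule top_sum_le_total[OF paulis_finite kc]) simp
    have c: "(pnorm n (Xi Ob))^2 = real d * (hs_norm Ob)^2"
      unfolding pnorm_sq parseval[OF H'] hs_norm_sq[OF herm_carrier[OF H']] by (simp add: dd)
    show ?thesis using a b c by blast
  qed
  have H: "hermitian d R" if "density d R" for R using that by (simp add: density_def)
  show ?thesis using P1 P2 H by blast
qed

end
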